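(* Let $\mathcal{D}\subseteq\mathcal{M}^0_+$ be solid and suppose its closure satisfies $\overline{\mathcal{D}}=\mathcal{M}^0_+$. Then for every $\epsilon\in(0,1)$ there exists $\mu\in\mathcal{M}^0_+$ with $\mathbb{P}[\mathrm{d}\mu/\mathrm{d}\mathbb{P}=0]<\epsilon$ such that $a\mu\in\mathcal{D}$ for all $a\in\mathbb{R}_+$.
   Context: $(\Omega,\mathcal{F},\mathbb{P})$ is a probability space. $\mathcal{M}^0_+$ is the convex cone of all $\sigma$-finite nonnegative measures on $(\Omega,\mathcal{F})$ absolutely continuous with respect to $\mathbb{P}$, identified with $\mathbb{L}^0_+$ via $\mu\mapsto\mathrm{d}\mu/\mathrm{d}\mathbb{P}$ and equipped with the topology transported from the topology of convergence in probability on $\mathbb{L}^0_+$ (closure is taken in this topology). $\mathcal{D}\subseteq\mathcal{M}^0_+$ is solid if $\nu\in\mathcal{D}$, $\mu\in\mathcal{M}^0_+$ and $\mu\le\nu$ (i.e. $\mu[A]\le\nu[A]$ for all $A\in\mathcal{F}$) imply $\mu\in\mathcal{D}$. *)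

theory Defs
  imports "HOL-Probability.Probability"
begin

text \<open>The cone M^0_+ of nonnegative finite measures absolutely continuous w.r.t. P,
  identified with L^0_+ via Radon-Nikodym densities: nonnegative real-valued
  measurable functions on the sample space.\<close>
definition L0_plus :: "'a measure \<Rightarrow> ('a \<Rightarrow> real) set" where
  "L0_plus M = {f \<in> borel_measurable M. \<forall>x\<in>space M. 0 \<le> f x}"

definition conv_in_prob :: "'a measure \<Rightarrow> (nat \<Rightarrow> 'a \<Rightarrow> real) \<Rightarrow> ('a \<Rightarrow> real) \<Rightarrow> bool" where
  "conv_in_prob M X f \<longleftrightarrow>
     (\<forall>e>0. (\<lambda>n. measure M {x \<in> space M. e < \<bar>X n x - f x\<bar>}) \<longlonglongrightarrow> 0)"

text \<open>Solidity: \<mu> \<le> \<nu> setwise is equivalent to d\<mu>/dP \<le> d\<nu>/dP P-a.e.\<close>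
definition solid :: "'a measure \<Rightarrow> ('a \<Rightarrow> real) set \<Rightarrow> bool" where
  "solid M D \<longleftrightarrow> D \<subseteq> L0_plus M \<and>
     (\<forall>g\<in>D. \<forall>f\<in>L0_plus M. (AE x in M. f x \<le> g x) \<longrightarrow> f \<in> D)"

text \<open>Closure in L^0_+ w.r.t. convergence in probability (a metrizable topology,
  so the closure equals the sequential closure).\<close>
definition prob_closure :: "'a measure \<Rightarrow> ('a \<Rightarrow> real) set \<Rightarrow> ('a \<Rightarrow> real) set" where
  "prob_closure M D = {f \<in> L0_plus M. \<exists>X. (\<forall>n. X n \<in> D) \<and> conv_in_prob M X f}"

end

theory Submission
  imports Defs
begin

theorem lemmaA1:
  fixes M :: "'a measure" and D :: "('a \<Rightarrow> real) set" and \<epsilon> :: real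
  assumes "prob_space M"
    and "solid M D"
    and "prob_closure M D = L0_plus M"
    and "0 < \<epsilon>" and "\<epsilon> < 1"
  shows "\<exists>f\<in>L0_plus M. measure M {x \<in> space M. f x = 0} < \<epsilon> \<and>
           (\<forall>a::real. 0 \<le> a \<longrightarrow> (\<lambda>x. a * f x) \<in> D)"
proof -
  interpret prob_space M by fact
  have DL: "D \<subseteq> L0_plus M" using assms(2) unfolding solid_def by blast
  have "\<forall>k::nat. \<exists>g\<in>D. measure M {x\<in>space M. g x < real k} < \<epsilon>/4 * (1/2)^k"
  proof
    fix k :: nat
    let ?c = "\<lambda>x::'a. real k + 1"
    have "?c \<in> L0_plus M" unfolding L0_plus_def by auto
    then obtain X where X: "\<forall>n. X n \<in> D" "conv_in_prob M X ?c"
      using assms(3) unfolding prob_closure_def by blast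
    have lim: "(\<lambda>n. measure M {x \<in> space M. 1 < \<bar>X n x - ?c x\<bar>}) \<longlonglongrightarrow> 0"
      using X(2) unfolding conv_in_prob_def by auto
    have pos: "\<epsilon>/4 * (1/2)^k > 0" using assms(4) by simp
    from LIMSEQ_D[OF lim pos] obtain no where
      "\<forall>n\<ge>no. norm (measure M {x \<in> space M. 1 < \<bar>X n x - ?c x\<bar>} - 0) < \<epsilon>/4 * (1/2)^k" by blast
    then have n: "measure M {x \<in> space M. 1 < \<bar>X no x - ?c x\<bar>} < \<epsilon>/4 * (1/2)^k" by simp
    define n where "n = no"
    note n = n[folded n_def]
    have meas: "X n \<in> borel_measurable M" using X(1) DL unfolding L0_plus_def by blast
    have "{x \<in> space M. 1 < \<bar>X n x - ?c x\<bar>} \<in> sets M" using meas by measurable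
    then have "measure M {x\<in>space M. X n x < real k} \<le> measure M {x \<in> space M. 1 < \<bar>X n x - ?c x\<bar>}"
      by (intro finite_measure_mono) auto
    then show "\<exists>g\<in>D. measure M {x\<in>space M. g x < real k} < \<epsilon>/4 * (1/2)^k"
      using n X(1) by (intro bexI[of _ "X n"]) auto
  qed
  then obtain g where g: "\<And>k. g k \<in> D" "\<And>k. measure M {x\<in>space M. g k x < real k} < \<epsilon>/4 * (1/2)^k"
    by metis
  have gm: "\<And>k. g k \<in> borel_measurable M" and gpos: "\<And>k x. x \<in> space M \<Longrightarrow> 0 \<le> g k x"
    using g(1) DL unfolding L0_plus_def by blast+
  define f where "f x = (if \<forall>k. real k \<le> g k x then 1 else (0::real))" for x
  have f1: "\<And>x. (\<forall>k. real k \<le> g k x) \<Longrightarrow> f x = 1" by (simp add: f_def)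
  have f0: "\<And>x. \<not>(\<forall>k. real k \<le> g k x) \<Longrightarrow> f x = 0" unfolding f_def by (rule if_not_P)
  have fm: "f \<in> borel_measurable M" unfolding f_def using gm by measurable
  have fL: "f \<in> L0_plus M" using fm unfolding L0_plus_def f_def by auto
  define A where "A k = {x\<in>space M. g k x < real k}" for k
  have Asets: "range A \<subseteq> sets M" unfolding A_def using gm by auto
  have eq: "{x \<in> space M. f x = 0} = (\<Union>k. A k)"
    unfolding A_def f_def by (auto simp: not_le)
  have gs: "summable (\<lambda>k. \<epsilon>/4 * (1/2::real)^k)"
    by (intro summable_mult summable_geometric) auto
  have Ale: "\<And>k. measure M (A k) \<le> \<epsilon>/4 * (1/2)^k" using g(2) unfolding A_def by (simp add: less_imp_le)
  have As: "summable (\<lambda>k. measure M (A k))"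
    by (rule summable_comparison_test[OF _ gs]) (use Ale in auto)
  have "measure M (\<Union>k. A k) \<le> (\<Sum>k. measure M (A k))"
    by (rule finite_measure_subadditive_countably[OF Asets As])
  also have "\<dots> \<le> (\<Sum>k. \<epsilon>/4 * (1/2::real)^k)"
    by (rule suminf_le[OF Ale As gs])
  also have "\<dots> = \<epsilon>/4 * 2"
  proof -
    have "(\<Sum>k. \<epsilon>/4 * (1/2::real)^k) = \<epsilon>/4 * (\<Sum>k. (1/2::real)^k)"
    proof -
      have sg: "summable (\<lambda>k. (1/2::real)^k)" by (rule summable_geometric) simp
      show ?thesis using suminf_mult[OF sg, of "\<epsilon>/4"] by (simp only:)
    qed
    also have "(\<Sum>k. (1/2::real)^k) = 2" using suminf_geometric[of "1/2::real"] by simp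
    finally show ?thesis .
  qed
  also have "\<dots> < \<epsilon>" using assms(4) by simp
  finally have small: "measure M {x \<in> space M. f x = 0} < \<epsilon>" using eq by simp
  have "(\<lambda>x. a * f x) \<in> D" if a: "0 \<le> a" for a :: real
  proof -
    obtain k :: nat where k: "a \<le> real k" using real_arch_simple by blast
    have L: "(\<lambda>x. a * f x) \<in> L0_plus M" using fm a unfolding L0_plus_def f_def by auto
    have AE: "AE x in M. a * f x \<le> g k x"
    proof (rule AE_I2)
      fix x assume x: "x \<in> space M"
      show "a * f x \<le> g k x"
      proof (cases "\<forall>k. real k \<le> g k x")
        case True
        then have "real k \<le> g k x" by blast
        then show ?thesis using k f1[OF True] by simp
      next
        case False
        then have "f x = 0" by (rule f0)
        then show ?thesis using gpos[OF x] by simp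
      qed
    qed
    have sol: "\<forall>g\<in>D. \<forall>f\<in>L0_plus M. (AE x in M. f x \<le> g x) \<longrightarrow> f \<in> D"
      using assms(2) unfolding solid_def by (rule conjunct2)
    have "\<forall>f\<in>L0_plus M. (AE x in M. f x \<le> g k x) \<longrightarrow> f \<in> D" using sol g(1)[of k] by (rule bspec)
    then have "(AE x in M. a * f x \<le> g k x) \<longrightarrow> (\<lambda>x. a * f x) \<in> D" using L by (rule bspec)
    then show ?thesis using AE by (rule mp)
  qed
  then show ?thesis using fL small by blast
qed

end
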